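(* Suppose that $(A_1,B_1)$ and $(A_2,B_2)$ are pairs of Gram mates. Then $A_1\otimes A_2$ and $B_1\otimes B_2$ are Gram mates, where $\otimes$ denotes the Kronecker product.
   Context: Two $(0,1)$ matrices $A,B$ are Gram mates if $AA^T=BB^T$, $A^TA=B^TB$ and $A\neq B$. *)

theory Defs
  imports "HOL-Analysis.Analysis"
begin

definition zero_one_matrix :: "real ^ 'n ^ 'm \<Rightarrow> bool" where
  "zero_one_matrix A \<longleftrightarrow> (\<forall>i j. A $ i $ j = 0 \<or> A $ i $ j = 1)"

definition gram_mates :: "real ^ 'n ^ 'm \<Rightarrow> real ^ 'n ^ 'm \<Rightarrow> bool" where
  "gram_mates A B \<longleftrightarrow> zero_one_matrix A \<and> zero_one_matrix B \<and>
     A ** transpose A = B ** transpose B \<and>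
     transpose A ** A = transpose B ** B \<and> A \<noteq> B"

text \<open>Kronecker product; rows/columns indexed by pairs, ordered lexicographically.\<close>
definition kronecker :: "real ^ 'n1 ^ 'm1 \<Rightarrow> real ^ 'n2 ^ 'm2 \<Rightarrow> real ^ ('n1 \<times> 'n2) ^ ('m1 \<times> 'm2)" where
  "kronecker A B = (\<chi> i j. A $ fst i $ fst j * B $ snd i $ snd j)"

end

theory Submission
  imports Defs
begin

lemma kron_transpose: "transpose (kronecker A B) = kronecker (transpose A) (transpose B)"
  by (simp add: kronecker_def transpose_def vec_eq_iff)

lemma kron_mult:
  fixes A :: "real ^ 'n1 ^ 'm1" and C :: "real ^ 'p1 ^ 'n1"
    and B :: "real ^ 'n2 ^ 'm2" and D :: "real ^ 'p2 ^ 'n2"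
  shows "kronecker A B ** kronecker C D = kronecker (A ** C) (B ** D)"
proof -
  have "(\<Sum>k\<in>UNIV. A $ fst i $ fst k * B $ snd i $ snd k * (C $ fst k $ fst j * D $ snd k $ snd j))
      = (\<Sum>a\<in>UNIV. A $ fst i $ a * C $ a $ fst j) * (\<Sum>b\<in>UNIV. B $ snd i $ b * D $ b $ snd j)"
    for i :: "'m1 \<times> 'm2" and j :: "'p1 \<times> 'p2"
  proof -
    have "(\<Sum>a\<in>UNIV. A $ fst i $ a * C $ a $ fst j) * (\<Sum>b\<in>UNIV. B $ snd i $ b * D $ b $ snd j)
       = (\<Sum>a\<in>UNIV. \<Sum>b\<in>UNIV. (A $ fst i $ a * C $ a $ fst j) * (B $ snd i $ b * D $ b $ snd j))"
      by (rule sum_product)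
    also have "\<dots> = (\<Sum>k\<in>UNIV \<times> UNIV. (A $ fst i $ fst k * C $ fst k $ fst j) * (B $ snd i $ snd k * D $ snd k $ snd j))"
      by (subst sum.cartesian_product) (simp add: case_prod_beta)
    also have "\<dots> = (\<Sum>k\<in>UNIV. A $ fst i $ fst k * B $ snd i $ snd k * (C $ fst k $ fst j * D $ snd k $ snd j))"
      by (simp add: case_prod_beta mult_ac)
    finally show ?thesis by simp
  qed
  then show ?thesis
    by (simp add: kronecker_def matrix_matrix_mult_def vec_eq_iff)
qed

lemma gram_zero:
  fixes A :: "real ^ 'n ^ 'm"
  assumes "A ** transpose A = 0"
  shows "A = 0"
proof -
  have "A $ i $ j = 0" for i j
  proof -
    have "(\<Sum>k\<in>UNIV. A $ i $ k * A $ i $ k) = 0"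
      using assms unfolding vec_eq_iff by (auto simp: matrix_matrix_mult_def transpose_def dest: spec[of _ i])
    then have "\<forall>k\<in>UNIV. A $ i $ k * A $ i $ k = 0"
      by (subst (asm) sum_nonneg_eq_0_iff) auto
    then show ?thesis by simp
  qed
  then show ?thesis by (simp add: vec_eq_iff)
qed

lemma kron_neq:
  fixes A1 B1 :: "real ^ 'n1 ^ 'm1" and A2 B2 :: "real ^ 'n2 ^ 'm2"
  assumes "gram_mates A1 B1" and "gram_mates A2 B2"
  shows "kronecker A1 A2 \<noteq> kronecker B1 B2"
proof
  assume eq: "kronecker A1 A2 = kronecker B1 B2"
  have e: "A1 $ i $ j * A2 $ k $ l = B1 $ i $ j * B2 $ k $ l" for i j k l
    using eq unfolding kronecker_def vec_eq_iff
    by (auto dest: spec[of _ "(i,k)"] dest!: spec[of _ "(j,l)"])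
  have z1: "zero_one_matrix A1" "zero_one_matrix B1" "zero_one_matrix A2" "zero_one_matrix B2"
    "A1 ** transpose A1 = B1 ** transpose B1" "A2 ** transpose A2 = B2 ** transpose B2"
    "A1 \<noteq> B1" "A2 \<noteq> B2"
    using assms by (auto simp: gram_mates_def)
  show False
  proof (cases "A2 = 0")
    case True
    then have "B2 ** transpose B2 = 0" using z1(6) by simp
    then have "B2 = 0" by (rule gram_zero)
    then show ?thesis using True z1(8) by simp
  next
    case False
    then obtain k l where kl: "A2 $ k $ l \<noteq> 0" by (auto simp: vec_eq_iff)
    then have a1: "A2 $ k $ l = 1" using z1(3) unfolding zero_one_matrix_def by blast
    show ?thesis
    proof (cases "B2 $ k $ l = 0")
      case True
      then have "A1 = 0" using e[of _ _ k l] a1 by (simp add: vec_eq_iff)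
      then have "B1 ** transpose B1 = 0" using z1(5) by simp
      then have "B1 = 0" by (rule gram_zero)
      then show ?thesis using \<open>A1 = 0\<close> z1(7) by simp
    next
      case False
      then have "B2 $ k $ l = 1" using z1(4) unfolding zero_one_matrix_def by blast
      then have "A1 = B1" using e[of _ _ k l] a1 by (simp add: vec_eq_iff)
      then show ?thesis using z1(7) by simp
    qed
  qed
qed

theorem proposition5p3:
  fixes A1 B1 :: "real ^ 'n1 ^ 'm1" and A2 B2 :: "real ^ 'n2 ^ 'm2"
  assumes "gram_mates A1 B1" and "gram_mates A2 B2"
  shows "gram_mates (kronecker A1 A2) (kronecker B1 B2)"
proof -
  have z: "zero_one_matrix A1" "zero_one_matrix B1" "zero_one_matrix A2" "zero_one_matrix B2"
    "A1 ** transpose A1 = B1 ** transpose B1" "A2 ** transpose A2 = B2 ** transpose B2"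
    "transpose A1 ** A1 = transpose B1 ** B1" "transpose A2 ** A2 = transpose B2 ** B2"
    using assms by (auto simp: gram_mates_def)
  have zo: "zero_one_matrix (kronecker A B)" if "zero_one_matrix A" "zero_one_matrix B"
    for A :: "real ^ 'n1 ^ 'm1" and B :: "real ^ 'n2 ^ 'm2"
    unfolding zero_one_matrix_def kronecker_def
  proof (intro allI)
    fix i j
    have "A $ fst i $ fst j = 0 \<or> A $ fst i $ fst j = 1" "B $ snd i $ snd j = 0 \<or> B $ snd i $ snd j = 1"
      using that unfolding zero_one_matrix_def by blast+
    then show "(\<chi> i j. A $ fst i $ fst j * B $ snd i $ snd j) $ i $ j = 0 \<or> (\<chi> i j. A $ fst i $ fst j * B $ snd i $ snd j) $ i $ j = 1"
      by auto
  qed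
  show ?thesis
    unfolding gram_mates_def
    using zo[OF z(1,3)] zo[OF z(2,4)] kron_neq[OF assms] z(5-8)
    by (simp add: kron_transpose kron_mult)
qed

end
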